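(* Let $\{a_n[e^{-x}]\}_L=\{2^{-n}\}=1,\tfrac12,\tfrac14,\dots$. Then \[ \{a_n[e^{-x}]\}_L=\sum_{k=0}^{\infty}(-1)^k\{a_n[x^k/k!]\}_R , \] where for each index $n$ the (in general divergent) series $\sum_{k\ge0}(-1)^k a_n[x^k/k!]_R$ is interpreted as an Abel sum, i.e. its value is $\lim_{t\to1^-}\sum_{k\ge0}(-1)^k a_n[x^k/k!]_R\,t^k$.
   Context: Sequences are indexed by $n=0,1,2,\dots$. The right integral is $\mathcal{I}_R^0\{a_n\}=\{\sum_{j=0}^{n}a_j\}$. Define $\{a_n[x^0/0!]\}_R=\{1\}$, $\{a_n[x^1/1!]\}_R=\{n\}=0,1,2,\dots$, and for $k\ge2$, $\{a_n[x^k/k!]\}_R=(\mathcal{I}_R^0)^{k-1}\{n\}$; $a_n[x^k/k!]_R$ denotes the $n$-th term of $\{a_n[x^k/k!]\}_R$. *)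

theory Defs
  imports Complex_Main
begin

definition right_integral :: "(nat \<Rightarrow> real) \<Rightarrow> (nat \<Rightarrow> real)" where
  "right_integral a = (\<lambda>n. \<Sum>j\<le>n. a j)"

text \<open>The sequence {a_n[x^k/k!]}_R: {1} for k = 0, {n} for k = 1,
  and (I_R)^(k-1) {n} for k >= 2.\<close>
definition mono_seq_R :: "nat \<Rightarrow> nat \<Rightarrow> real" where
  "mono_seq_R k = (if k = 0 then (\<lambda>n. 1)
                   else if k = 1 then (\<lambda>n. real n)
                   else (right_integral ^^ (k - 1)) (\<lambda>n. real n))"

definition exp_neg_seq_L :: "nat \<Rightarrow> real" where
  "exp_neg_seq_L n = (1/2) ^ n"

definition abel_sums :: "(nat \<Rightarrow> real) \<Rightarrow> real \<Rightarrow> bool" where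
  "abel_sums f s \<longleftrightarrow>
     (\<forall>t::real. 0 \<le> t \<and> t < 1 \<longrightarrow> summable (\<lambda>k. f k * t ^ k)) \<and>
     ((\<lambda>t. \<Sum>k. f k * t ^ k) \<longlongrightarrow> s) (at_left 1)"

end

theory Submission
  imports Defs "HOL-Analysis.Generalised_Binomial_Theorem"
begin

lemma RI0: "right_integral a 0 = a 0" by (simp add: right_integral_def)
lemma RIS: "right_integral a (Suc n) = right_integral a n + a (Suc n)" by (simp add: right_integral_def)

lemma iter_closed: "(right_integral ^^ m) (\<lambda>n. real n) n = real ((n + m) choose (m + 1))"
proof (induction m arbitrary: n)
  case 0
  then show ?case by simp
next
  case (Suc m)
  note IHm = Suc.IH
  show ?case
  proof (induction n)
    case 0
    then show ?case by (simp only: funpow.simps comp_def RI0 IHm) simp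
  next
    case (Suc n)
    have "(right_integral ^^ Suc m) (\<lambda>n. real n) (Suc n)
        = (right_integral ^^ Suc m) (\<lambda>n. real n) n + (right_integral ^^ m) (\<lambda>n. real n) (Suc n)"
      by (simp only: funpow.simps comp_def RIS)
    also have "\<dots> = real ((n + Suc m) choose (Suc m + 1)) + real ((Suc n + m) choose (m+1))"
      using Suc.IH IHm by simp
    also have "\<dots> = real ((Suc n + Suc m) choose (Suc m + 1))"
    proof -
      have "(Suc n + Suc m) choose (Suc m + 1) = Suc (n + Suc m) choose (Suc (Suc m))" by simp
      also have "\<dots> = ((n + Suc m) choose (Suc m)) + ((n + Suc m) choose (Suc (Suc m)))"
        by (rule binomial_Suc_Suc)
      finally show ?thesis by simp
    qed
    finally show ?case .
  qed
qed

lemma mono_closed: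
  "(-1) ^ k * mono_seq_R k n = ((- real n) gchoose k)"
proof (cases "k = 0")
  case True
  then show ?thesis by (simp add: mono_seq_R_def)
next
  case False
  have A: "mono_seq_R k n = real ((n + k - 1) choose k)"
  proof (cases "k = 1")
    case True then show ?thesis by (simp add: mono_seq_R_def)
  next
    case False
    with \<open>k \<noteq> 0\<close> have "k - 1 + 1 = k" "n + (k - 1) = n + k - 1" by auto
    then show ?thesis using False \<open>k \<noteq> 0\<close> by (simp add: mono_seq_R_def iter_closed)
  qed
  have "((- real n) gchoose k) = (-1) ^ k * ((real k - (- real n) - 1) gchoose k)"
    by (rule gbinomial_negated_upper)
  also have "real k - (- real n) - 1 = real (n + k - 1)" using False by simp
  also have "(real (n + k - 1) gchoose k) = real ((n + k - 1) choose k)"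
    by (simp add: binomial_gbinomial)
  finally show ?thesis using A by simp
qed

theorem mainTheorem11:
  shows "\<forall>n::nat. abel_sums (\<lambda>k. (-1) ^ k * mono_seq_R k n) (exp_neg_seq_L n)"
proof
  fix n :: nat
  have S: "(\<lambda>k. (-1) ^ k * mono_seq_R k n * t ^ k) sums (1 + t) powr (- real n)"
    if "0 \<le> t" "t < 1" for t :: real
    using gen_binomial_real[of t "- real n"] that by (simp add: mono_closed)
  have ev: "eventually (\<lambda>t. (\<Sum>k. (-1) ^ k * mono_seq_R k n * t ^ k) = (1 + t) powr (- real n))
      (at_left (1::real))"
  proof -
    have "eventually (\<lambda>t::real. t \<in> {0<..<1}) (at_left 1)"
      by (rule eventually_at_left_real) simp
    then show ?thesis
      by eventually_elim (metis S sums_unique greaterThanLessThan_iff less_le)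
  qed
  have "((\<lambda>t. (1 + t) powr (- real n)) \<longlongrightarrow> (1 + 1) powr (- real n)) (at_left (1::real))"
    by (intro tendsto_intros) auto
  moreover have "(1 + 1::real) powr (- real n) = exp_neg_seq_L n"
    by (simp add: exp_neg_seq_L_def powr_minus powr_realpow power_divide inverse_eq_divide)
  ultimately have "((\<lambda>t. (1 + t) powr (- real n)) \<longlongrightarrow> exp_neg_seq_L n) (at_left (1::real))"
    by simp
  then have "((\<lambda>t. \<Sum>k. (-1) ^ k * mono_seq_R k n * t ^ k) \<longlongrightarrow> exp_neg_seq_L n) (at_left (1::real))"
    using tendsto_cong[OF ev] by simp
  moreover have "\<forall>t::real. 0 \<le> t \<and> t < 1 \<longrightarrow> summable (\<lambda>k. (-1) ^ k * mono_seq_R k n * t ^ k)"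
    using S sums_summable by blast
  ultimately show "abel_sums (\<lambda>k. (-1) ^ k * mono_seq_R k n) (exp_neg_seq_L n)"
    unfolding abel_sums_def by simp
qed

end
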